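(* Let $M$ be a commutative monoid. Every nonempty irreducible closed subset $Y$ of the terminal space $\mathcal S(M)$ has a unique generic point, i.e. there is a unique $I\in Y$ with $Y=\overline{\{I\}}$.
   Context: A monoid is a commutative monoid $(M,\cdot,1)$. An ideal of $M$ is a subset $I\subseteq M$ such that $im\in I$ for all $i\in I$, $m\in M$; it is proper if $I\neq M$. A proper ideal $K$ of $M$ is strongly irreducible if for all ideals $I,J$ of $M$, $I\cap J\subseteq K$ implies $I\subseteq K$ or $J\subseteq K$. $\mathcal S(M)$ is the set of all strongly irreducible ideals of $M$. For $X\subseteq\mathcal S(M)$, $\mathcal K(X)=\bigcap_{I\in X}I$, and $\mathcal{HK}(X)=\{J\in\mathcal S(M)\mid J\supseteq\mathcal K(X)\}$ if $X\neq\emptyset$, $\mathcal{HK}(\emptyset)=\emptyset$. The terminal space of $M$ is the set $\mathcal S(M)$ with the topology whose closed sets are exactly the sets $\mathcal{HK}(X)$, $X\subseteq\mathcal S(M)$. A subset $Y$ of a topological space is irreducible if whenever $Y\subseteq Y_1\cup Y_2$ with $Y_1,Y_2$ closed, then $Y\subseteq Y_1$ or $Y\subseteq Y_2$. *)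

theory Defs
  imports Main
begin

definition mideal :: "'a::comm_monoid_mult set \<Rightarrow> bool" where
  "mideal I \<longleftrightarrow> (\<forall>i\<in>I. \<forall>m. i * m \<in> I)"

definition strongly_irreducible :: "'a::comm_monoid_mult set \<Rightarrow> bool" where
  "strongly_irreducible K \<longleftrightarrow> mideal K \<and> K \<noteq> UNIV \<and>
     (\<forall>I J. mideal I \<longrightarrow> mideal J \<longrightarrow> I \<inter> J \<subseteq> K \<longrightarrow> I \<subseteq> K \<or> J \<subseteq> K)"

definition SI :: "'a::comm_monoid_mult set set" where
  "SI = {K. strongly_irreducible K}"

definition KK :: "'a::comm_monoid_mult set set \<Rightarrow> 'a set" where
  "KK X = \<Inter>X"

definition HK :: "'a::comm_monoid_mult set set \<Rightarrow> 'a set set" where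
  "HK X = (if X = {} then {} else {J \<in> SI. KK X \<subseteq> J})"

definition terminal_closed :: "'a::comm_monoid_mult set set \<Rightarrow> bool" where
  "terminal_closed Y \<longleftrightarrow> (\<exists>X. X \<subseteq> SI \<and> Y = HK X)"

definition terminal_closure :: "'a::comm_monoid_mult set set \<Rightarrow> 'a set set" where
  "terminal_closure A = \<Inter>{C. terminal_closed C \<and> A \<subseteq> C}"

definition terminal_irreducible :: "'a::comm_monoid_mult set set \<Rightarrow> bool" where
  "terminal_irreducible Y \<longleftrightarrow> (\<forall>Y1 Y2. terminal_closed Y1 \<longrightarrow> terminal_closed Y2 \<longrightarrow>
      Y \<subseteq> Y1 \<union> Y2 \<longrightarrow> Y \<subseteq> Y1 \<or> Y \<subseteq> Y2)"

end

theory Submission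
  imports Defs
begin

lemma closed_sub: "terminal_closed C \<Longrightarrow> C \<subseteq> SI"
  unfolding terminal_closed_def HK_def by (auto split: if_splits)

lemma closed_eq:
  assumes "terminal_closed C" "C \<noteq> {}"
  shows "C = {J \<in> SI. \<Inter>C \<subseteq> J}"
proof -
  obtain X where X: "X \<subseteq> SI" "C = HK X" using assms(1) unfolding terminal_closed_def by blast
  have Xne: "X \<noteq> {}" using X assms(2) unfolding HK_def by auto
  have C: "C = {J \<in> SI. \<Inter>X \<subseteq> J}" using X Xne unfolding HK_def KK_def by auto
  have "\<Inter>C = \<Inter>X"
  proof
    show "\<Inter>C \<subseteq> \<Inter>X" using X(1) C by auto
    show "\<Inter>X \<subseteq> \<Inter>C" using C by auto
  qed
  then show ?thesis using C by simp
qed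

lemma closed_HK: "terminal_closed (HK X)" if "X \<subseteq> SI"
  using that unfolding terminal_closed_def by blast

lemma up_closed:
  assumes "I \<in> SI" shows "terminal_closed {J \<in> SI. I \<subseteq> J}"
proof -
  have "HK {I} = {J \<in> SI. I \<subseteq> J}" unfolding HK_def KK_def by auto
  then show ?thesis using closed_HK[of "{I}"] assms by auto
qed

lemma closure_single:
  assumes "I \<in> SI" shows "terminal_closure {I} = {J \<in> SI. I \<subseteq> J}"
proof
  show "terminal_closure {I} \<subseteq> {J \<in> SI. I \<subseteq> J}"
    unfolding terminal_closure_def using up_closed[OF assms] assms by blast
  show "{J \<in> SI. I \<subseteq> J} \<subseteq> terminal_closure {I}"
  proof (unfold terminal_closure_def, rule Inter_greatest)
    fix C assume "C \<in> {C. terminal_closed C \<and> {I} \<subseteq> C}"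
    then have C: "terminal_closed C" "I \<in> C" by auto
    then have "C = {J \<in> SI. \<Inter>C \<subseteq> J}" using closed_eq by blast
    moreover have "\<Inter>C \<subseteq> I" using C by auto
    ultimately show "{J \<in> SI. I \<subseteq> J} \<subseteq> C" by blast
  qed
qed

lemma sub_closed:
  assumes "terminal_closed Y" "Y \<noteq> {}"
  shows "terminal_closed {J \<in> Y. A \<subseteq> J}"
proof (cases "{J \<in> Y. A \<subseteq> J} = {}")
  case True
  then have "{J \<in> Y. A \<subseteq> J} = HK {}" by (simp add: HK_def)
  then show ?thesis using closed_HK[of "{}"] by simp
next
  case False
  let ?Y1 = "{J \<in> Y. A \<subseteq> J}"
  have Y: "\<And>J. J \<in> SI \<Longrightarrow> \<Inter>Y \<subseteq> J \<Longrightarrow> J \<in> Y" using closed_eq[OF assms] by blast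
  have "HK ?Y1 = ?Y1"
  proof
    show "?Y1 \<subseteq> HK ?Y1" using False closed_sub[OF assms(1)] unfolding HK_def KK_def by auto
    show "HK ?Y1 \<subseteq> ?Y1"
    proof
      fix J assume "J \<in> HK ?Y1"
      moreover have "HK ?Y1 = {J \<in> SI. \<Inter>?Y1 \<subseteq> J}" unfolding HK_def KK_def by (rule if_not_P[OF False])
      ultimately have J: "J \<in> SI" "\<Inter>?Y1 \<subseteq> J" by blast+
      have "A \<subseteq> \<Inter>?Y1" "\<Inter>Y \<subseteq> \<Inter>?Y1" by auto
      then show "J \<in> ?Y1" using J Y[of J] by blast
    qed
  qed
  moreover have "?Y1 \<subseteq> SI" using closed_sub[OF assms(1)] by auto
  ultimately show ?thesis using closed_HK by metis
qed

theorem corollary2p7: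
  fixes Y :: "'a::comm_monoid_mult set set"
  assumes "terminal_closed Y" and "Y \<noteq> {}" and "terminal_irreducible Y"
  shows "\<exists>!I. I \<in> Y \<and> Y = terminal_closure {I}"
proof -
  have YSI: "Y \<subseteq> SI" using closed_sub assms(1) by blast
  have Y: "\<And>J. J \<in> SI \<Longrightarrow> \<Inter>Y \<subseteq> J \<Longrightarrow> J \<in> Y" using closed_eq[OF assms(1,2)] by blast
  have si: "strongly_irreducible J" if "J \<in> Y" for J using YSI that unfolding SI_def by auto
  have "mideal (\<Inter>Y)" using si unfolding strongly_irreducible_def mideal_def by blast
  moreover have "\<Inter>Y \<noteq> UNIV" using si assms(2) unfolding strongly_irreducible_def by blast
  moreover have "\<forall>A B. mideal A \<longrightarrow> mideal B \<longrightarrow> A \<inter> B \<subseteq> \<Inter>Y \<longrightarrow> A \<subseteq> \<Inter>Y \<or> B \<subseteq> \<Inter>Y"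
  proof (intro allI impI)
    fix A B :: "'a set" assume h: "mideal A" "mideal B" "A \<inter> B \<subseteq> \<Inter>Y"
    have "Y \<subseteq> {J \<in> Y. A \<subseteq> J} \<union> {J \<in> Y. B \<subseteq> J}"
    proof
      fix J assume "J \<in> Y"
      then show "J \<in> {J \<in> Y. A \<subseteq> J} \<union> {J \<in> Y. B \<subseteq> J}"
        using si[of J] h unfolding strongly_irreducible_def by blast
    qed
    then have "Y \<subseteq> {J \<in> Y. A \<subseteq> J} \<or> Y \<subseteq> {J \<in> Y. B \<subseteq> J}"
      using assms(3) sub_closed[OF assms(1,2)] unfolding terminal_irreducible_def by blast
    then show "A \<subseteq> \<Inter>Y \<or> B \<subseteq> \<Inter>Y" by blast
  qed
  ultimately have "strongly_irreducible (\<Inter>Y)" unfolding strongly_irreducible_def by blast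
  then have inS: "\<Inter>Y \<in> SI" unfolding SI_def by simp
  then have inY: "\<Inter>Y \<in> Y" using Y by blast
  have Yeq: "Y = {J \<in> SI. \<Inter>Y \<subseteq> J}" using closed_eq assms(1,2) by blast
  show ?thesis
  proof (rule ex1I[of _ "\<Inter>Y"])
    show "\<Inter>Y \<in> Y \<and> Y = terminal_closure {\<Inter>Y}"
      using inY closure_single[OF inS] Yeq by simp
  next
    fix I assume I: "I \<in> Y \<and> Y = terminal_closure {I}"
    then have "Y = {J \<in> SI. I \<subseteq> J}" using closure_single YSI by blast
    then have "I \<subseteq> \<Inter>Y" by blast
    moreover have "\<Inter>Y \<subseteq> I" using I by blast
    ultimately show "I = \<Inter>Y" by blast
  qed
qed

end
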